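(* Suppose $\theta_t=\theta$ for all $t$ (a constant) and $\mathbb{S}_\theta=\{\theta\in\mathbb{R}^{d_\theta}:[\theta]_k\ge0\ \forall k,\ \sum_{k=1}^{d_\theta}[\theta]_k=1\}$. Then the system $x_{t+1}=A_t(\theta)x_t+B_t(\theta)u_t$ is time-invariant SMP in each of the following cases. (i) ($v_t$ i.i.d.) $v_t(\theta)=v_t$ is i.i.d. with respect to $t$ and independent of $\theta$: it is TI SMP with $N=1$, $\phi(\theta)=1$, $M^{(1)}=\mathrm{E}[v_tv_t^\top]$. (ii) (deterministic polytope) $v_t(\theta)=\sum_{k=1}^{d_\theta}[\theta]_kv^{(k)}$ with deterministic vectors $v^{(k)}\in\mathbb{R}^{n(n+m)}$, and the conditional expectation $\mathrm{E}[v_tv_t^\top|\theta]$ is taken as the deterministic value $v_tv_t^\top$: it is TI SMP with $N=d_\theta^2$, $\phi(\theta)=\mathrm{vec}(\theta\theta^\top)$, $M^{(d_\theta(k'-1)+k)}=\tfrac12\big(v^{(k)}v^{(k')\top}+v^{(k')}v^{(k)\top}\big)$ for $k,k'\in\{1,\dots,d_\theta\}$. (iii) (random polytope) $v_t(\theta)=\sum_{k=1}^{d_\theta}[\theta]_kv_t^{(k)}$ where the random vertices $v_t^{(k)}$ are i.i.d. with respect to $t$ and independent of $\theta$: it is TI SMP with $N=d_\theta^2$, $\phi(\theta)=\mathrm{vec}(\theta\theta^\top)$, $M^{(d_\theta(k'-1)+k)}=\tfrac12\mathrm{E}\big[v_t^{(k)}v_t^{(k')\top}+v_t^{(k')}v_t^{(k)\top}\big]$.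 (iv) (uncertain mean and covariance) $\mathrm{E}[v_t(\theta)|\theta]=\sum_{k=1}^{d_\theta}[\theta]_k\mu^{(k)}$ and $\mathrm{Cov}[v_t(\theta)|\theta]=\sum_{k=1}^{d_\theta}[\theta]_k\Sigma^{(k)}$ with deterministic $\mu^{(k)}\in\mathbb{R}^{n(n+m)}$ and symmetric $\Sigma^{(k)}$: it is TI SMP with $N=d_\theta^2$, $\phi(\theta)=\mathrm{vec}(\theta\theta^\top)$, $M^{(d_\theta(k'-1)+k)}=\tfrac12\big(\mu^{(k)}\mu^{(k')\top}+\mu^{(k')}\mu^{(k)\top}\big)+\Sigma^{(k)}$.
   Context: System $x_{t+1}=A_t(\theta_t)x_t+B_t(\theta_t)u_t$ with $x_t\in\mathbb{R}^n$, $u_t\in\mathbb{R}^m$, uncertain $\theta_t\in\mathbb{S}_\theta\subset\mathbb{R}^{d_\theta}$, and random $v_t(\theta_t):=\mathrm{vec}([A_t(\theta_t),B_t(\theta_t)])\in\mathbb{R}^{n(n+m)}$ ($\mathrm{vec}$ stacks columns), distributed according to a conditional density $p(v_t\mid\theta_t)$ independently over $t$; $\mathrm{E}[\cdot|\theta]$ and $\mathrm{Cov}[\cdot|\theta]$ are conditional expectation/covariance given the parameter sequence. $\mathbb{P}_N:=\{\varphi\in\mathbb{R}^N:\varphi_k\ge0,\sum\varphi_k=1\}$. The system is second moment polytopic (SMP) if there exist a positive integer $N$, symmetric $M^{(1)},\dots,M^{(N)}\in\mathbb{R}^{n(n+m)\times n(n+m)}$ and a map $\phi:\mathbb{S}_\theta\to\mathbb{P}_N$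 with $\mathrm{E}[v_t(\theta_t)v_t(\theta_t)^\top|\theta_\bullet]=\sum_{k=1}^N[\phi(\theta_t)]_kM^{(k)}$ for all $t$ and all parameter sequences; it is time-invariant (TI) SMP if moreover $\theta_t=\theta$ is constant. *)

theory Defs
  imports "HOL-Probability.Probability"
begin

text \<open>Vectors in R^p are functions nat \<Rightarrow> real, only indices < p are
meaningful (0-based). Matrices are nat \<Rightarrow> nat \<Rightarrow> real (row, column).
A family of N matrices is nat \<Rightarrow> nat \<Rightarrow> nat \<Rightarrow> real.\<close>

text \<open>Standard std_simplex in R^p (S_theta for p = d_theta, P_N for p = N);
entries outside the index range are required to be 0 (canonical representative).\<close>
definition std_simplex :: "nat \<Rightarrow> (nat \<Rightarrow> real) set" where
  "std_simplex p = {x. (\<forall>k<p. 0 \<le> x k) \<and> (\<Sum>k<p. x k) = 1 \<and> (\<forall>k\<ge>p. x k = 0)}"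

text \<open>vec([A, B]) for A (n x n), B (n x m): stacking columns of the n x (n+m) matrix.
0-based index i + n*j corresponds to entry (i, j).\<close>
definition vecAB :: "nat \<Rightarrow> nat \<Rightarrow> (nat \<Rightarrow> nat \<Rightarrow> real) \<Rightarrow> (nat \<Rightarrow> nat \<Rightarrow> real) \<Rightarrow> nat \<Rightarrow> real" where
  "vecAB n m A B = (\<lambda>idx. if idx < n * (n + m) then
      (if idx div n < n then A (idx mod n) (idx div n) else B (idx mod n) (idx div n - n))
     else 0)"

definition sysvec :: "nat \<Rightarrow> nat \<Rightarrow> (nat \<Rightarrow> (nat \<Rightarrow> real) \<Rightarrow> 'w \<Rightarrow> nat \<Rightarrow> nat \<Rightarrow> real)
    \<Rightarrow> (nat \<Rightarrow> (nat \<Rightarrow> real) \<Rightarrow> 'w \<Rightarrow> nat \<Rightarrow> nat \<Rightarrow> real) \<Rightarrow> nat \<Rightarrow> (nat \<Rightarrow> real) \<Rightarrow> 'w \<Rightarrow> nat \<Rightarrow> real" where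
  "sysvec n m A B = (\<lambda>t \<theta> \<omega>. vecAB n m (A t \<theta> \<omega>) (B t \<theta> \<omega>))"

definition vecM :: "nat \<Rightarrow> (nat \<Rightarrow> real) measure" where
  "vecM p = PiM {..<p} (\<lambda>_. borel)"

definition rv :: "nat \<Rightarrow> ('w \<Rightarrow> nat \<Rightarrow> real) \<Rightarrow> 'w \<Rightarrow> nat \<Rightarrow> real" where
  "rv p X = (\<lambda>\<omega>. restrict (X \<omega>) {..<p})"

definition iid :: "'w measure \<Rightarrow> 'b measure \<Rightarrow> (nat \<Rightarrow> 'w \<Rightarrow> 'b) \<Rightarrow> bool" where
  "iid M N X \<longleftrightarrow> prob_space.indep_vars M (\<lambda>_. N) X UNIV \<and>
     (\<forall>t. distr M N (X t) = distr M N (X 0))"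

text \<open>vec(theta theta^T): 0-based index d*k' + k holds theta_k * theta_k'.\<close>
definition vec_outer :: "nat \<Rightarrow> (nat \<Rightarrow> real) \<Rightarrow> nat \<Rightarrow> real" where
  "vec_outer d \<theta> = (\<lambda>i. if i < d * d then \<theta> (i mod d) * \<theta> (i div d) else 0)"

text \<open>Time-invariant SMP with the given data N, phi, M^(1..N) (0-based indices k < N):
for every constant parameter theta in S_theta and every t,
E[v_t v_t^T | theta] = sum_k phi(theta)_k M^(k) (second moments existing).\<close>
definition TI_SMP_with :: "'w measure \<Rightarrow> nat \<Rightarrow> nat \<Rightarrow> (nat \<Rightarrow> (nat \<Rightarrow> real) \<Rightarrow> 'w \<Rightarrow> nat \<Rightarrow> real)
    \<Rightarrow> nat \<Rightarrow> ((nat \<Rightarrow> real) \<Rightarrow> nat \<Rightarrow> real) \<Rightarrow> (nat \<Rightarrow> nat \<Rightarrow> nat \<Rightarrow> real) \<Rightarrow> bool" where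
  "TI_SMP_with M D d v N \<phi> Ms \<longleftrightarrow>
     0 < N \<and>
     (\<forall>k<N. \<forall>i<D. \<forall>j<D. Ms k i j = Ms k j i) \<and>
     (\<forall>\<theta>\<in>std_simplex d. \<phi> \<theta> \<in> std_simplex N) \<and>
     (\<forall>t. \<forall>\<theta>\<in>std_simplex d. \<forall>i<D. \<forall>j<D.
        integrable M (\<lambda>\<omega>. v t \<theta> \<omega> i * v t \<theta> \<omega> j) \<and>
        (\<integral>\<omega>. v t \<theta> \<omega> i * v t \<theta> \<omega> j \<partial>M) = (\<Sum>k<N. \<phi> \<theta> k * Ms k i j))"

definition TI_SMP :: "'w measure \<Rightarrow> nat \<Rightarrow> nat \<Rightarrow> (nat \<Rightarrow> (nat \<Rightarrow> real) \<Rightarrow> 'w \<Rightarrow> nat \<Rightarrow> real) \<Rightarrow> bool" where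
  "TI_SMP M D d v \<longleftrightarrow> (\<exists>N \<phi> Ms. TI_SMP_with M D d v N \<phi> Ms)"

end

theory Submission
  imports Defs
begin


lemma sum_divmod:
  fixes g :: "nat \<Rightarrow> nat \<Rightarrow> real"
  shows "(\<Sum>idx<d*d. g (idx mod d) (idx div d)) = (\<Sum>k<d. \<Sum>k'<d. g k k')"
proof -
  have img: "{..<d*d} = (\<lambda>(k,k'). k + d*k') ` ({..<d} \<times> {..<d})"
  proof
    show "{..<d*d} \<subseteq> (\<lambda>(k,k'). k + d*k') ` ({..<d} \<times> {..<d})"
    proof
      fix x assume x: "x \<in> {..<d*d}"
      then have "d > 0" by (cases d) auto
      then have "x mod d < d" "x div d < d" using x by (auto simp: div_less_iff_less_mult)
      moreover have "x = x mod d + d * (x div d)" by simp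
      ultimately show "x \<in> (\<lambda>(k,k'). k + d*k') ` ({..<d} \<times> {..<d})"
        by (intro image_eqI[where x="(x mod d, x div d)"]) auto
    qed
  next
    show "(\<lambda>(k,k'). k + d*k') ` ({..<d} \<times> {..<d}) \<subseteq> {..<d*d}"
    proof clarsimp
      fix a b assume "a < d" "b < d"
      then have "a + d*b < d + d*b" by simp
      also have "\<dots> = d * (Suc b)" by simp
      also have "\<dots> \<le> d*d" using \<open>b<d\<close> by (intro mult_le_mono2) simp
      finally show "a + d*b < d*d" .
    qed
  qed
  have inj: "inj_on (\<lambda>(k,k'). k + d*k') ({..<d} \<times> {..<d})"
  proof (rule inj_onI, clarsimp)
    fix a b a' b' assume "a < d" "b < d" "a' < d" "b' < d" "a + d*b = a' + d*b'"
    then have "(a + d*b) mod d = (a' + d*b') mod d" "(a + d*b) div d = (a' + d*b') div d" by simp_all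
    with \<open>a<d\<close> \<open>a'<d\<close> show "a = a' \<and> b = b'" by simp
  qed
  have "(\<Sum>idx<d*d. g (idx mod d) (idx div d)) = (\<Sum>p\<in>{..<d} \<times> {..<d}. g (fst p) (snd p))"
    unfolding img by (subst sum.reindex[OF inj]) (auto intro!: sum.cong)
  also have "\<dots> = (\<Sum>k<d. \<Sum>k'<d. g k k')" by (simp add: sum.cartesian_product split_beta)
  finally show ?thesis .
qed

lemma vec_outer_simplex:
  assumes "\<theta> \<in> std_simplex d"
  shows "vec_outer d \<theta> \<in> std_simplex (d^2)"
proof -
  have s: "(\<Sum>k<d. \<theta> k) = 1" and nn: "\<forall>k<d. 0 \<le> \<theta> k" using assms by (auto simp: std_simplex_def)
  have "(\<Sum>k<d^2. vec_outer d \<theta> k) = (\<Sum>idx<d*d. \<theta> (idx mod d) * \<theta> (idx div d))"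
    by (auto simp: vec_outer_def power2_eq_square intro!: sum.cong)
  also have "\<dots> = (\<Sum>k<d. \<Sum>k'<d. \<theta> k * \<theta> k')" by (rule sum_divmod)
  also have "\<dots> = (\<Sum>k<d. \<theta> k) * (\<Sum>k'<d. \<theta> k')" by (simp add: sum_product)
  finally have "(\<Sum>k<d^2. vec_outer d \<theta> k) = 1" using s by simp
  moreover have "\<forall>k<d^2. 0 \<le> vec_outer d \<theta> k"
  proof (intro allI impI)
    fix k assume "k < d^2"
    then have "d > 0" by (cases d) auto
    then have "k mod d < d" by simp
    moreover have "k div d < d" using \<open>k < d^2\<close> by (simp add: power2_eq_square div_less_iff_less_mult \<open>d>0\<close>)
    ultimately show "0 \<le> vec_outer d \<theta> k" using nn by (simp add: vec_outer_def)
  qed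
  ultimately show ?thesis by (auto simp: std_simplex_def vec_outer_def power2_eq_square)
qed

lemma sum_outer_sym:
  fixes F :: "nat \<Rightarrow> nat \<Rightarrow> real"
  shows "(\<Sum>idx<d^2. vec_outer d \<theta> idx * ((F (idx mod d) (idx div d) + F (idx div d) (idx mod d)) / 2))
       = (\<Sum>k<d. \<Sum>k'<d. \<theta> k * \<theta> k' * F k k')"
proof -
  have "(\<Sum>idx<d^2. vec_outer d \<theta> idx * ((F (idx mod d) (idx div d) + F (idx div d) (idx mod d)) / 2))
     = (\<Sum>idx<d*d. (\<lambda>k k'. \<theta> k * \<theta> k' * ((F k k' + F k' k) / 2)) (idx mod d) (idx div d))"
    by (auto simp: vec_outer_def power2_eq_square intro!: sum.cong)
  also have "\<dots> = (\<Sum>k<d. \<Sum>k'<d. \<theta> k * \<theta> k' * ((F k k' + F k' k) / 2))" by (rule sum_divmod)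
  also have "\<dots> = ((\<Sum>k<d. \<Sum>k'<d. \<theta> k * \<theta> k' * F k k') + (\<Sum>k<d. \<Sum>k'<d. \<theta> k * \<theta> k' * F k' k)) / 2"
  proof -
    have "\<And>k k'. \<theta> k * \<theta> k' * ((F k k' + F k' k) / 2) = (\<theta> k * \<theta> k' * F k k' + \<theta> k * \<theta> k' * F k' k) / 2"
      by (simp add: algebra_simps)
    then show ?thesis by (simp only: sum_divide_distrib[symmetric] sum.distrib)
  qed
  also have "(\<Sum>k<d. \<Sum>k'<d. \<theta> k * \<theta> k' * F k' k) = (\<Sum>k<d. \<Sum>k'<d. \<theta> k * \<theta> k' * F k k')"
    by (subst sum.swap) (simp add: mult.commute)
  finally show ?thesis by simp
qed

lemma sum_outer_left:
  fixes G :: "nat \<Rightarrow> real"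
  assumes "\<theta> \<in> std_simplex d"
  shows "(\<Sum>idx<d^2. vec_outer d \<theta> idx * G (idx mod d)) = (\<Sum>k<d. \<theta> k * G k)"
proof -
  have s: "(\<Sum>k<d. \<theta> k) = 1" using assms by (auto simp: std_simplex_def)
  have "(\<Sum>idx<d^2. vec_outer d \<theta> idx * G (idx mod d))
     = (\<Sum>idx<d*d. (\<lambda>k k'. \<theta> k * \<theta> k' * G k) (idx mod d) (idx div d))"
    by (auto simp: vec_outer_def power2_eq_square intro!: sum.cong)
  also have "\<dots> = (\<Sum>k<d. \<Sum>k'<d. \<theta> k * \<theta> k' * G k)" by (rule sum_divmod)
  also have "\<dots> = (\<Sum>k<d. \<theta> k * G k * (\<Sum>k'<d. \<theta> k'))"
    by (simp add: sum_distrib_left algebra_simps)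
  finally show ?thesis using s by simp
qed

lemma iid_transfer:
  assumes M: "prob_space M" and I: "iid M N X" and f: "f \<in> borel_measurable N"
    and int0: "integrable M (\<lambda>\<omega>. f (X 0 \<omega>) :: real)"
  shows "integrable M (\<lambda>\<omega>. f (X t \<omega>))" "(\<integral>\<omega>. f (X t \<omega>) \<partial>M) = (\<integral>\<omega>. f (X 0 \<omega>) \<partial>M)"
proof -
  have meas: "\<And>t. X t \<in> measurable M N"
    using I M unfolding iid_def by (simp add: prob_space.indep_vars_def2)
  have dist: "distr M N (X t) = distr M N (X 0)" using I unfolding iid_def by blast
  show "integrable M (\<lambda>\<omega>. f (X t \<omega>))"
    using int0 dist integrable_distr_eq[OF meas f] by metis
  show "(\<integral>\<omega>. f (X t \<omega>) \<partial>M) = (\<integral>\<omega>. f (X 0 \<omega>) \<partial>M)"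
    using dist integral_distr[OF meas f] by metis
qed


lemma part1:
  fixes v :: "nat \<Rightarrow> (nat \<Rightarrow> real) \<Rightarrow> 'w \<Rightarrow> nat \<Rightarrow> real" and w :: "nat \<Rightarrow> 'w \<Rightarrow> nat \<Rightarrow> real"
  assumes M: "prob_space M"
    and h: "\<forall>t. \<forall>\<theta>\<in>std_simplex d. \<forall>\<omega>\<in>space M. \<forall>i<D. v t \<theta> \<omega> i = w t \<omega> i"
    and I: "iid M (vecM D) (\<lambda>t. rv D (w t))"
    and int0: "\<forall>i<D. \<forall>j<D. integrable M (\<lambda>\<omega>. w 0 \<omega> i * w 0 \<omega> j)"
  shows "TI_SMP_with M D d v 1 (\<lambda>\<theta> k. if k = 0 then 1 else 0)
           (\<lambda>k i j. \<integral>\<omega>. w 0 \<omega> i * w 0 \<omega> j \<partial>M)"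
proof -
  have main: "integrable M (\<lambda>\<omega>. v t \<theta> \<omega> i * v t \<theta> \<omega> j) \<and>
        (\<integral>\<omega>. v t \<theta> \<omega> i * v t \<theta> \<omega> j \<partial>M) = (\<integral>\<omega>. w 0 \<omega> i * w 0 \<omega> j \<partial>M)"
    if th: "\<theta> \<in> std_simplex d" and ij: "i < D" "j < D" for t \<theta> i j
  proof -
    let ?f = "\<lambda>x::nat\<Rightarrow>real. x i * x j"
    have fm: "?f \<in> borel_measurable (vecM D)"
      unfolding vecM_def using ij by (auto intro!: borel_measurable_times measurable_component_singleton)
    have eq: "\<And>t \<omega>. ?f (rv D (w t) \<omega>) = w t \<omega> i * w t \<omega> j" using ij by (simp add: rv_def)
    have i0: "integrable M (\<lambda>\<omega>. ?f (rv D (w 0) \<omega>))" using int0 ij by (simp add: eq)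
    have T: "integrable M (\<lambda>\<omega>. ?f (rv D (w t) \<omega>))"
      "(\<integral>\<omega>. ?f (rv D (w t) \<omega>) \<partial>M) = (\<integral>\<omega>. ?f (rv D (w 0) \<omega>) \<partial>M)"
      using iid_transfer[OF M I fm, of t] i0 by auto
    have c: "\<And>\<omega>. \<omega> \<in> space M \<Longrightarrow> v t \<theta> \<omega> i * v t \<theta> \<omega> j = w t \<omega> i * w t \<omega> j"
      using h th ij by auto
    show ?thesis
      using T by (simp add: eq Bochner_Integration.integrable_cong[OF refl c] Bochner_Integration.integral_cong[OF refl c])
  qed
  show ?thesis unfolding TI_SMP_with_def
    using main by (auto simp: std_simplex_def mult.commute)
qed

lemma part2:
  fixes v :: "nat \<Rightarrow> (nat \<Rightarrow> real) \<Rightarrow> 'w \<Rightarrow> nat \<Rightarrow> real" and vk :: "nat \<Rightarrow> nat \<Rightarrow> real"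
  assumes M: "prob_space M" and d: "0 < d"
    and h: "\<forall>t. \<forall>\<theta>\<in>std_simplex d. \<forall>\<omega>\<in>space M. \<forall>i<D. v t \<theta> \<omega> i = (\<Sum>k<d. \<theta> k * vk k i)"
  shows "TI_SMP_with M D d v (d^2) (vec_outer d)
           (\<lambda>idx i j. (vk (idx mod d) i * vk (idx div d) j + vk (idx div d) i * vk (idx mod d) j) / 2)"
proof -
  interpret prob_space M by (rule M)
  have main: "integrable M (\<lambda>\<omega>. v t \<theta> \<omega> i * v t \<theta> \<omega> j) \<and>
        (\<integral>\<omega>. v t \<theta> \<omega> i * v t \<theta> \<omega> j \<partial>M) = (\<Sum>idx<d^2. vec_outer d \<theta> idx *
           ((vk (idx mod d) i * vk (idx div d) j + vk (idx div d) i * vk (idx mod d) j) / 2))"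
    if th: "\<theta> \<in> std_simplex d" and ij: "i < D" "j < D" for t \<theta> i j
  proof -
    let ?c = "(\<Sum>k<d. \<theta> k * vk k i) * (\<Sum>k<d. \<theta> k * vk k j)"
    have c: "\<And>\<omega>. \<omega> \<in> space M \<Longrightarrow> v t \<theta> \<omega> i * v t \<theta> \<omega> j = ?c"
      using h th ij by auto
    have "?c = (\<Sum>k<d. \<Sum>k'<d. \<theta> k * \<theta> k' * (vk k i * vk k' j))"
      by (simp add: sum_product algebra_simps)
    also have "\<dots> = (\<Sum>idx<d^2. vec_outer d \<theta> idx *
           ((vk (idx mod d) i * vk (idx div d) j + vk (idx div d) i * vk (idx mod d) j) / 2))"
      by (rule sum_outer_sym[of d \<theta> "\<lambda>k k'. vk k i * vk k' j", symmetric])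
    finally show ?thesis
      by (simp add: Bochner_Integration.integrable_cong[OF refl c] Bochner_Integration.integral_cong[OF refl c] prob_space)
  qed
  show ?thesis unfolding TI_SMP_with_def
    using main d vec_outer_simplex by (auto simp: algebra_simps)
qed


lemma part3:
  fixes v :: "nat \<Rightarrow> (nat \<Rightarrow> real) \<Rightarrow> 'w \<Rightarrow> nat \<Rightarrow> real" and V :: "nat \<Rightarrow> nat \<Rightarrow> 'w \<Rightarrow> nat \<Rightarrow> real"
  assumes M: "prob_space M" and d: "0 < d"
    and h: "\<forall>t. \<forall>\<theta>\<in>std_simplex d. \<forall>\<omega>\<in>space M. \<forall>i<D. v t \<theta> \<omega> i = (\<Sum>k<d. \<theta> k * V t k \<omega> i)"
    and I: "iid M (PiM {..<d} (\<lambda>_. vecM D)) (\<lambda>t \<omega>. restrict (\<lambda>k. rv D (V t k) \<omega>) {..<d})"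
    and int0: "\<forall>k<d. \<forall>k'<d. \<forall>i<D. \<forall>j<D. integrable M (\<lambda>\<omega>. V 0 k \<omega> i * V 0 k' \<omega> j)"
  shows "TI_SMP_with M D d v (d^2) (vec_outer d)
           (\<lambda>idx i j. (\<integral>\<omega>. V 0 (idx mod d) \<omega> i * V 0 (idx div d) \<omega> j
                          + V 0 (idx div d) \<omega> i * V 0 (idx mod d) \<omega> j \<partial>M) / 2)"
proof -
  interpret prob_space M by (rule M)
  have tr: "integrable M (\<lambda>\<omega>. V t k \<omega> i * V t k' \<omega> j) \<and>
     (\<integral>\<omega>. V t k \<omega> i * V t k' \<omega> j \<partial>M) = (\<integral>\<omega>. V 0 k \<omega> i * V 0 k' \<omega> j \<partial>M)"
    if kk: "k < d" "k' < d" and ij: "i < D" "j < D" for t k k' i j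
  proof -
    let ?f = "\<lambda>x::nat\<Rightarrow>nat\<Rightarrow>real. x k i * x k' j"
    have c1: "(\<lambda>x::nat\<Rightarrow>nat\<Rightarrow>real. x a b) \<in> borel_measurable (PiM {..<d} (\<lambda>_. vecM D))"
      if "a < d" "b < D" for a b
    proof -
      have "(\<lambda>x::nat\<Rightarrow>nat\<Rightarrow>real. x a) \<in> measurable (PiM {..<d} (\<lambda>_. vecM D)) (vecM D)"
        using that by (auto intro!: measurable_component_singleton)
      moreover have "(\<lambda>y::nat\<Rightarrow>real. y b) \<in> borel_measurable (vecM D)"
        unfolding vecM_def using that by (auto intro!: measurable_component_singleton)
      ultimately show ?thesis using measurable_compose by fastforce
    qed
    have fm: "?f \<in> borel_measurable (PiM {..<d} (\<lambda>_. vecM D))"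
      using c1 kk ij by (auto intro!: borel_measurable_times)
    have eq: "\<And>t \<omega>. ?f (restrict (\<lambda>k. rv D (V t k) \<omega>) {..<d}) = V t k \<omega> i * V t k' \<omega> j"
      using ij kk by (simp add: rv_def)
    have i0: "integrable M (\<lambda>\<omega>. ?f (restrict (\<lambda>k. rv D (V 0 k) \<omega>) {..<d}))"
      using int0 ij kk by (simp add: rv_def)
    show ?thesis
      using iid_transfer[OF M I fm, of t] i0 using kk ij by (auto simp: rv_def)
  qed
  have main: "integrable M (\<lambda>\<omega>. v t \<theta> \<omega> i * v t \<theta> \<omega> j) \<and>
        (\<integral>\<omega>. v t \<theta> \<omega> i * v t \<theta> \<omega> j \<partial>M) = (\<Sum>idx<d^2. vec_outer d \<theta> idx *
           ((\<integral>\<omega>. V 0 (idx mod d) \<omega> i * V 0 (idx div d) \<omega> j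
                          + V 0 (idx div d) \<omega> i * V 0 (idx mod d) \<omega> j \<partial>M) / 2))"
    if th: "\<theta> \<in> std_simplex d" and ij: "i < D" "j < D" for t \<theta> i j
  proof -
    let ?g = "\<lambda>\<omega>. (\<Sum>k<d. \<Sum>k'<d. \<theta> k * \<theta> k' * (V t k \<omega> i * V t k' \<omega> j))"
    have c: "v t \<theta> \<omega> i * v t \<theta> \<omega> j = ?g \<omega>" if "\<omega> \<in> space M" for \<omega>
    proof -
      have "v t \<theta> \<omega> i * v t \<theta> \<omega> j = (\<Sum>k<d. \<theta> k * V t k \<omega> i) * (\<Sum>k<d. \<theta> k * V t k \<omega> j)"
        using h th ij that by simp
      also have "\<dots> = (\<Sum>k<d. \<Sum>k'<d. (\<theta> k * V t k \<omega> i) * (\<theta> k' * V t k' \<omega> j))"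
        by (rule sum_product)
      also have "\<dots> = ?g \<omega>" by (intro sum.cong refl) (simp only: mult_ac)
      finally show ?thesis .
    qed
    have iik: "integrable M (\<lambda>\<omega>. \<theta> k * \<theta> k' * (V t k \<omega> i * V t k' \<omega> j))"
      if "k < d" "k' < d" for k k' using tr[OF that ij] by (intro integrable_mult_right) auto
    have ig: "integrable M ?g" using iik by (intro Bochner_Integration.integrable_sum) auto
    have "(\<integral>\<omega>. ?g \<omega> \<partial>M) = (\<Sum>k<d. \<integral>\<omega>. (\<Sum>k'<d. \<theta> k * \<theta> k' * (V t k \<omega> i * V t k' \<omega> j)) \<partial>M)"
      using iik by (intro Bochner_Integration.integral_sum Bochner_Integration.integrable_sum) auto
    also have "\<dots> = (\<Sum>k<d. \<Sum>k'<d. \<integral>\<omega>. \<theta> k * \<theta> k' * (V t k \<omega> i * V t k' \<omega> j) \<partial>M)"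
      using iik by (intro sum.cong refl Bochner_Integration.integral_sum) auto
    also have "\<dots> = (\<Sum>k<d. \<Sum>k'<d. \<theta> k * \<theta> k' * (\<integral>\<omega>. V t k \<omega> i * V t k' \<omega> j \<partial>M))"
      by (intro sum.cong refl integral_mult_right_zero)
    also have "\<dots> = (\<Sum>k<d. \<Sum>k'<d. \<theta> k * \<theta> k' * (\<integral>\<omega>. V 0 k \<omega> i * V 0 k' \<omega> j \<partial>M))"
    proof (intro sum.cong refl)
      fix k k' assume "k \<in> {..<d}" "k' \<in> {..<d}"
      then show "\<theta> k * \<theta> k' * (\<integral>\<omega>. V t k \<omega> i * V t k' \<omega> j \<partial>M) =
        \<theta> k * \<theta> k' * (\<integral>\<omega>. V 0 k \<omega> i * V 0 k' \<omega> j \<partial>M)"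
        using tr[of k k' i j t] ij by simp
    qed
    also have "\<dots> = (\<Sum>idx<d^2. vec_outer d \<theta> idx *
           (((\<integral>\<omega>. V 0 (idx mod d) \<omega> i * V 0 (idx div d) \<omega> j \<partial>M) +
             (\<integral>\<omega>. V 0 (idx div d) \<omega> i * V 0 (idx mod d) \<omega> j \<partial>M)) / 2))"
      by (rule sum_outer_sym[of d \<theta> "\<lambda>k k'. \<integral>\<omega>. V 0 k \<omega> i * V 0 k' \<omega> j \<partial>M", symmetric])
    also have "\<dots> = (\<Sum>idx<d^2. vec_outer d \<theta> idx *
           ((\<integral>\<omega>. V 0 (idx mod d) \<omega> i * V 0 (idx div d) \<omega> j
                          + V 0 (idx div d) \<omega> i * V 0 (idx mod d) \<omega> j \<partial>M) / 2))"
    proof (rule sum.cong[OF refl])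
      fix idx assume "idx \<in> {..<d^2}"
      then have "idx mod d < d" "idx div d < d" using d
        by (auto simp: power2_eq_square div_less_iff_less_mult)
      then show "vec_outer d \<theta> idx *
           (((\<integral>\<omega>. V 0 (idx mod d) \<omega> i * V 0 (idx div d) \<omega> j \<partial>M) +
             (\<integral>\<omega>. V 0 (idx div d) \<omega> i * V 0 (idx mod d) \<omega> j \<partial>M)) / 2) =
          vec_outer d \<theta> idx *
           ((\<integral>\<omega>. V 0 (idx mod d) \<omega> i * V 0 (idx div d) \<omega> j
                          + V 0 (idx div d) \<omega> i * V 0 (idx mod d) \<omega> j \<partial>M) / 2)"
        using int0 ij by simp
    qed
    finally show ?thesis using ig
      by (simp add: Bochner_Integration.integrable_cong[OF refl c] Bochner_Integration.integral_cong[OF refl c])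
  qed
  have sym: "\<forall>k<d^2. \<forall>i<D. \<forall>j<D. (\<integral>\<omega>. V 0 (k mod d) \<omega> i * V 0 (k div d) \<omega> j
                          + V 0 (k div d) \<omega> i * V 0 (k mod d) \<omega> j \<partial>M) / 2 =
        (\<integral>\<omega>. V 0 (k mod d) \<omega> j * V 0 (k div d) \<omega> i
                          + V 0 (k div d) \<omega> j * V 0 (k mod d) \<omega> i \<partial>M) / 2"
  proof (intro allI impI)
    fix k i j
    have "(\<lambda>\<omega>. V 0 (k mod d) \<omega> i * V 0 (k div d) \<omega> j + V 0 (k div d) \<omega> i * V 0 (k mod d) \<omega> j) =
          (\<lambda>\<omega>. V 0 (k mod d) \<omega> j * V 0 (k div d) \<omega> i + V 0 (k div d) \<omega> j * V 0 (k mod d) \<omega> i)"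
      by (rule ext) (simp only: mult.commute add.commute)
    then show "(\<integral>\<omega>. V 0 (k mod d) \<omega> i * V 0 (k div d) \<omega> j
                          + V 0 (k div d) \<omega> i * V 0 (k mod d) \<omega> j \<partial>M) / 2 =
        (\<integral>\<omega>. V 0 (k mod d) \<omega> j * V 0 (k div d) \<omega> i
                          + V 0 (k div d) \<omega> j * V 0 (k mod d) \<omega> i \<partial>M) / 2" by simp
  qed
  show ?thesis unfolding TI_SMP_with_def
  proof (intro conjI)
    show "0 < d^2" using d by simp
    show "\<forall>\<theta>\<in>std_simplex d. vec_outer d \<theta> \<in> std_simplex (d\<^sup>2)" using vec_outer_simplex by blast
    show "\<forall>k<d\<^sup>2. \<forall>i<D. \<forall>j<D. (\<integral>\<omega>. V 0 (k mod d) \<omega> i * V 0 (k div d) \<omega> j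
                          + V 0 (k div d) \<omega> i * V 0 (k mod d) \<omega> j \<partial>M) / 2 =
        (\<integral>\<omega>. V 0 (k mod d) \<omega> j * V 0 (k div d) \<omega> i
                          + V 0 (k div d) \<omega> j * V 0 (k mod d) \<omega> i \<partial>M) / 2" by (rule sym)
  qed (intro allI ballI impI main; assumption)
qed


lemma part4:
  fixes v :: "nat \<Rightarrow> (nat \<Rightarrow> real) \<Rightarrow> 'w \<Rightarrow> nat \<Rightarrow> real"
    and \<mu> :: "nat \<Rightarrow> nat \<Rightarrow> real" and \<Sigma> :: "nat \<Rightarrow> nat \<Rightarrow> nat \<Rightarrow> real"
  assumes M: "prob_space M" and d: "0 < d"
    and sy: "\<forall>k<d. \<forall>i<D. \<forall>j<D. \<Sigma> k i j = \<Sigma> k j i"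
    and int: "\<forall>t. \<forall>\<theta>\<in>std_simplex d. \<forall>i<D. \<forall>j<D.
          integrable M (\<lambda>\<omega>. v t \<theta> \<omega> i) \<and> integrable M (\<lambda>\<omega>. v t \<theta> \<omega> i * v t \<theta> \<omega> j)"
    and mean: "\<forall>t. \<forall>\<theta>\<in>std_simplex d. \<forall>i<D. (\<integral>\<omega>. v t \<theta> \<omega> i \<partial>M) = (\<Sum>k<d. \<theta> k * \<mu> k i)"
    and cov: "\<forall>t. \<forall>\<theta>\<in>std_simplex d. \<forall>i<D. \<forall>j<D.
          (\<integral>\<omega>. (v t \<theta> \<omega> i - (\<integral>\<omega>'. v t \<theta> \<omega>' i \<partial>M)) * (v t \<theta> \<omega> j - (\<integral>\<omega>'. v t \<theta> \<omega>' j \<partial>M)) \<partial>M)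
            = (\<Sum>k<d. \<theta> k * \<Sigma> k i j)"
  shows "TI_SMP_with M D d v (d^2) (vec_outer d)
           (\<lambda>idx i j. (\<mu> (idx mod d) i * \<mu> (idx div d) j + \<mu> (idx div d) i * \<mu> (idx mod d) j) / 2
                      + \<Sigma> (idx mod d) i j)"
proof -
  interpret prob_space M by (rule M)
  have main: "integrable M (\<lambda>\<omega>. v t \<theta> \<omega> i * v t \<theta> \<omega> j) \<and>
        (\<integral>\<omega>. v t \<theta> \<omega> i * v t \<theta> \<omega> j \<partial>M) = (\<Sum>idx<d^2. vec_outer d \<theta> idx *
           ((\<mu> (idx mod d) i * \<mu> (idx div d) j + \<mu> (idx div d) i * \<mu> (idx mod d) j) / 2
                      + \<Sigma> (idx mod d) i j))"
    if th: "\<theta> \<in> std_simplex d" and ij: "i < D" "j < D" for t \<theta> i j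
  proof -
    define a where "a = (\<integral>\<omega>. v t \<theta> \<omega> i \<partial>M)"
    define b where "b = (\<integral>\<omega>. v t \<theta> \<omega> j \<partial>M)"
    have ii: "integrable M (\<lambda>\<omega>. v t \<theta> \<omega> i)" and ij': "integrable M (\<lambda>\<omega>. v t \<theta> \<omega> j)"
      and iij: "integrable M (\<lambda>\<omega>. v t \<theta> \<omega> i * v t \<theta> \<omega> j)" using int th ij by auto
    have ex: "(\<lambda>\<omega>. (v t \<theta> \<omega> i - a) * (v t \<theta> \<omega> j - b)) =
      (\<lambda>\<omega>. (v t \<theta> \<omega> i * v t \<theta> \<omega> j - a * v t \<theta> \<omega> j) - (b * v t \<theta> \<omega> i - a * b))"
      by (rule ext) (simp add: algebra_simps)
    have "(\<integral>\<omega>. (v t \<theta> \<omega> i - a) * (v t \<theta> \<omega> j - b) \<partial>M) =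
        (\<integral>\<omega>. v t \<theta> \<omega> i * v t \<theta> \<omega> j \<partial>M) - a * b - (b * a - a * b)"
      unfolding ex using ii ij' iij
      by (simp add: Bochner_Integration.integral_diff prob_space a_def[symmetric] b_def[symmetric])
    then have E: "(\<integral>\<omega>. v t \<theta> \<omega> i * v t \<theta> \<omega> j \<partial>M) = (\<Sum>k<d. \<theta> k * \<Sigma> k i j) + a * b"
      using cov th ij unfolding a_def b_def by auto
    have ab: "a * b = (\<Sum>k<d. \<Sum>k'<d. \<theta> k * \<theta> k' * (\<mu> k i * \<mu> k' j))"
      using mean th ij unfolding a_def b_def by (simp add: sum_product algebra_simps)
    have "(\<Sum>idx<d^2. vec_outer d \<theta> idx *
           ((\<mu> (idx mod d) i * \<mu> (idx div d) j + \<mu> (idx div d) i * \<mu> (idx mod d) j) / 2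
                      + \<Sigma> (idx mod d) i j)) =
          (\<Sum>idx<d^2. vec_outer d \<theta> idx *
           ((\<mu> (idx mod d) i * \<mu> (idx div d) j + \<mu> (idx div d) i * \<mu> (idx mod d) j) / 2)) +
          (\<Sum>idx<d^2. vec_outer d \<theta> idx * \<Sigma> (idx mod d) i j)"
      by (simp only: distrib_left sum.distrib)
    also have "\<dots> = a * b + (\<Sum>k<d. \<theta> k * \<Sigma> k i j)"
      unfolding ab sum_outer_sym[of d \<theta> "\<lambda>k k'. \<mu> k i * \<mu> k' j"]
        sum_outer_left[OF th, of "\<lambda>k. \<Sigma> k i j"] by simp
    finally show ?thesis using E iij by simp
  qed
  have sym: "\<forall>k<d\<^sup>2. \<forall>i<D. \<forall>j<D.
      (\<mu> (k mod d) i * \<mu> (k div d) j + \<mu> (k div d) i * \<mu> (k mod d) j) / 2 + \<Sigma> (k mod d) i j =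
      (\<mu> (k mod d) j * \<mu> (k div d) i + \<mu> (k div d) j * \<mu> (k mod d) i) / 2 + \<Sigma> (k mod d) j i"
  proof (intro allI impI)
    fix k i j assume "k < d^2" "i < D" "j < D"
    then have "k mod d < d" using d by simp
    then show "(\<mu> (k mod d) i * \<mu> (k div d) j + \<mu> (k div d) i * \<mu> (k mod d) j) / 2 + \<Sigma> (k mod d) i j =
      (\<mu> (k mod d) j * \<mu> (k div d) i + \<mu> (k div d) j * \<mu> (k mod d) i) / 2 + \<Sigma> (k mod d) j i"
      using sy \<open>i<D\<close> \<open>j<D\<close> by (simp add: mult.commute add.commute)
  qed
  show ?thesis unfolding TI_SMP_with_def
  proof (intro conjI)
    show "0 < d^2" using d by simp
    show "\<forall>\<theta>\<in>std_simplex d. vec_outer d \<theta> \<in> std_simplex (d\<^sup>2)" using vec_outer_simplex by blast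
    show "\<forall>k<d\<^sup>2. \<forall>i<D. \<forall>j<D.
      (\<mu> (k mod d) i * \<mu> (k div d) j + \<mu> (k div d) i * \<mu> (k mod d) j) / 2 + \<Sigma> (k mod d) i j =
      (\<mu> (k mod d) j * \<mu> (k div d) i + \<mu> (k div d) j * \<mu> (k mod d) i) / 2 + \<Sigma> (k mod d) j i"
      by (rule sym)
  qed (intro allI ballI impI main; assumption)
qed


theorem theorem10:
  fixes M :: "'w measure" and n m d :: nat
    and A :: "nat \<Rightarrow> (nat \<Rightarrow> real) \<Rightarrow> 'w \<Rightarrow> nat \<Rightarrow> nat \<Rightarrow> real"
    and B :: "nat \<Rightarrow> (nat \<Rightarrow> real) \<Rightarrow> 'w \<Rightarrow> nat \<Rightarrow> nat \<Rightarrow> real"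
  defines "D \<equiv> n * (n + m)"
  defines "v \<equiv> sysvec n m A B"
  assumes M: "prob_space M"
    and d_pos: "0 < d"
    and indep_t: "\<forall>\<theta>\<in>std_simplex d. prob_space.indep_vars M (\<lambda>_. vecM D) (\<lambda>t. rv D (v t \<theta>)) UNIV"
  shows
   \<comment> \<open>(i) v_t i.i.d., independent of theta\<close>
   "(\<forall>w :: nat \<Rightarrow> 'w \<Rightarrow> nat \<Rightarrow> real.
       (\<forall>t. \<forall>\<theta>\<in>std_simplex d. \<forall>\<omega>\<in>space M. \<forall>i<D. v t \<theta> \<omega> i = w t \<omega> i) \<and>
       iid M (vecM D) (\<lambda>t. rv D (w t)) \<and>
       (\<forall>i<D. \<forall>j<D. integrable M (\<lambda>\<omega>. w 0 \<omega> i * w 0 \<omega> j))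
     \<longrightarrow> TI_SMP M D d v \<and>
         TI_SMP_with M D d v 1 (\<lambda>\<theta> k. if k = 0 then 1 else 0)
           (\<lambda>k i j. \<integral>\<omega>. w 0 \<omega> i * w 0 \<omega> j \<partial>M))
   \<and>
   \<comment> \<open>(ii) deterministic polytope\<close>
   (\<forall>vk :: nat \<Rightarrow> nat \<Rightarrow> real.
       (\<forall>t. \<forall>\<theta>\<in>std_simplex d. \<forall>\<omega>\<in>space M. \<forall>i<D. v t \<theta> \<omega> i = (\<Sum>k<d. \<theta> k * vk k i))
     \<longrightarrow> TI_SMP M D d v \<and>
         TI_SMP_with M D d v (d^2) (vec_outer d)
           (\<lambda>idx i j. (vk (idx mod d) i * vk (idx div d) j + vk (idx div d) i * vk (idx mod d) j) / 2))
   \<and>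
   \<comment> \<open>(iii) random polytope with i.i.d. random vertices independent of theta\<close>
   (\<forall>V :: nat \<Rightarrow> nat \<Rightarrow> 'w \<Rightarrow> nat \<Rightarrow> real.
       (\<forall>t. \<forall>\<theta>\<in>std_simplex d. \<forall>\<omega>\<in>space M. \<forall>i<D. v t \<theta> \<omega> i = (\<Sum>k<d. \<theta> k * V t k \<omega> i)) \<and>
       iid M (PiM {..<d} (\<lambda>_. vecM D)) (\<lambda>t \<omega>. restrict (\<lambda>k. rv D (V t k) \<omega>) {..<d}) \<and>
       (\<forall>k<d. \<forall>k'<d. \<forall>i<D. \<forall>j<D. integrable M (\<lambda>\<omega>. V 0 k \<omega> i * V 0 k' \<omega> j))
     \<longrightarrow> TI_SMP M D d v \<and>
         TI_SMP_with M D d v (d^2) (vec_outer d)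
           (\<lambda>idx i j. (\<integral>\<omega>. V 0 (idx mod d) \<omega> i * V 0 (idx div d) \<omega> j
                          + V 0 (idx div d) \<omega> i * V 0 (idx mod d) \<omega> j \<partial>M) / 2))
   \<and>
   \<comment> \<open>(iv) uncertain mean and covariance\<close>
   (\<forall>(\<mu> :: nat \<Rightarrow> nat \<Rightarrow> real) (\<Sigma> :: nat \<Rightarrow> nat \<Rightarrow> nat \<Rightarrow> real).
       (\<forall>k<d. \<forall>i<D. \<forall>j<D. \<Sigma> k i j = \<Sigma> k j i) \<and>
       (\<forall>t. \<forall>\<theta>\<in>std_simplex d. \<forall>i<D. \<forall>j<D.
          integrable M (\<lambda>\<omega>. v t \<theta> \<omega> i) \<and> integrable M (\<lambda>\<omega>. v t \<theta> \<omega> i * v t \<theta> \<omega> j)) \<and>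
       (\<forall>t. \<forall>\<theta>\<in>std_simplex d. \<forall>i<D. (\<integral>\<omega>. v t \<theta> \<omega> i \<partial>M) = (\<Sum>k<d. \<theta> k * \<mu> k i)) \<and>
       (\<forall>t. \<forall>\<theta>\<in>std_simplex d. \<forall>i<D. \<forall>j<D.
          (\<integral>\<omega>. (v t \<theta> \<omega> i - (\<integral>\<omega>'. v t \<theta> \<omega>' i \<partial>M)) * (v t \<theta> \<omega> j - (\<integral>\<omega>'. v t \<theta> \<omega>' j \<partial>M)) \<partial>M)
            = (\<Sum>k<d. \<theta> k * \<Sigma> k i j))
     \<longrightarrow> TI_SMP M D d v \<and>
         TI_SMP_with M D d v (d^2) (vec_outer d)
           (\<lambda>idx i j. (\<mu> (idx mod d) i * \<mu> (idx div d) j + \<mu> (idx div d) i * \<mu> (idx mod d) j) / 2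
                      + \<Sigma> (idx mod d) i j))"
proof -
  have ex: "TI_SMP M D d v" if "TI_SMP_with M D d v N \<phi> Ms" for N \<phi> Ms
    using that unfolding TI_SMP_def by blast
  show ?thesis
  proof (rule conjI[OF _ conjI[OF _ conjI]]; intro allI impI)
    fix w assume a: "(\<forall>t. \<forall>\<theta>\<in>std_simplex d. \<forall>\<omega>\<in>space M. \<forall>i<D. v t \<theta> \<omega> i = w t \<omega> i) \<and>
       iid M (vecM D) (\<lambda>t. rv D (w t)) \<and>
       (\<forall>i<D. \<forall>j<D. integrable M (\<lambda>\<omega>. w 0 \<omega> i * w 0 \<omega> j))"
    have "TI_SMP_with M D d v 1 (\<lambda>\<theta> k. if k = 0 then 1 else 0)
           (\<lambda>k i j. \<integral>\<omega>. w 0 \<omega> i * w 0 \<omega> j \<partial>M)"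
      using a by (intro part1[OF M]) auto
    then show "TI_SMP M D d v \<and> TI_SMP_with M D d v 1 (\<lambda>\<theta> k. if k = 0 then 1 else 0)
           (\<lambda>k i j. \<integral>\<omega>. w 0 \<omega> i * w 0 \<omega> j \<partial>M)" using ex by blast
  next
    fix vk :: "nat \<Rightarrow> nat \<Rightarrow> real"
    assume a: "\<forall>t. \<forall>\<theta>\<in>std_simplex d. \<forall>\<omega>\<in>space M. \<forall>i<D. v t \<theta> \<omega> i = (\<Sum>k<d. \<theta> k * vk k i)"
    note r = part2[OF M d_pos a]
    show "TI_SMP M D d v \<and> TI_SMP_with M D d v (d^2) (vec_outer d)
           (\<lambda>idx i j. (vk (idx mod d) i * vk (idx div d) j + vk (idx div d) i * vk (idx mod d) j) / 2)"
      using r ex by blast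
  next
    fix V :: "nat \<Rightarrow> nat \<Rightarrow> 'w \<Rightarrow> nat \<Rightarrow> real"
    assume a: "(\<forall>t. \<forall>\<theta>\<in>std_simplex d. \<forall>\<omega>\<in>space M. \<forall>i<D. v t \<theta> \<omega> i = (\<Sum>k<d. \<theta> k * V t k \<omega> i)) \<and>
       iid M (PiM {..<d} (\<lambda>_. vecM D)) (\<lambda>t \<omega>. restrict (\<lambda>k. rv D (V t k) \<omega>) {..<d}) \<and>
       (\<forall>k<d. \<forall>k'<d. \<forall>i<D. \<forall>j<D. integrable M (\<lambda>\<omega>. V 0 k \<omega> i * V 0 k' \<omega> j))"
    have r: "TI_SMP_with M D d v (d^2) (vec_outer d)
           (\<lambda>idx i j. (\<integral>\<omega>. V 0 (idx mod d) \<omega> i * V 0 (idx div d) \<omega> j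
                          + V 0 (idx div d) \<omega> i * V 0 (idx mod d) \<omega> j \<partial>M) / 2)"
      using a by (intro part3[OF M d_pos]) auto
    show "TI_SMP M D d v \<and> TI_SMP_with M D d v (d^2) (vec_outer d)
           (\<lambda>idx i j. (\<integral>\<omega>. V 0 (idx mod d) \<omega> i * V 0 (idx div d) \<omega> j
                          + V 0 (idx div d) \<omega> i * V 0 (idx mod d) \<omega> j \<partial>M) / 2)"
      using r ex by blast
  next
    fix \<mu> :: "nat \<Rightarrow> nat \<Rightarrow> real" and \<Sigma> :: "nat \<Rightarrow> nat \<Rightarrow> nat \<Rightarrow> real"
    assume a: "(\<forall>k<d. \<forall>i<D. \<forall>j<D. \<Sigma> k i j = \<Sigma> k j i) \<and>
       (\<forall>t. \<forall>\<theta>\<in>std_simplex d. \<forall>i<D. \<forall>j<D.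
          integrable M (\<lambda>\<omega>. v t \<theta> \<omega> i) \<and> integrable M (\<lambda>\<omega>. v t \<theta> \<omega> i * v t \<theta> \<omega> j)) \<and>
       (\<forall>t. \<forall>\<theta>\<in>std_simplex d. \<forall>i<D. (\<integral>\<omega>. v t \<theta> \<omega> i \<partial>M) = (\<Sum>k<d. \<theta> k * \<mu> k i)) \<and>
       (\<forall>t. \<forall>\<theta>\<in>std_simplex d. \<forall>i<D. \<forall>j<D.
          (\<integral>\<omega>. (v t \<theta> \<omega> i - (\<integral>\<omega>'. v t \<theta> \<omega>' i \<partial>M)) * (v t \<theta> \<omega> j - (\<integral>\<omega>'. v t \<theta> \<omega>' j \<partial>M)) \<partial>M)
            = (\<Sum>k<d. \<theta> k * \<Sigma> k i j))"
    have r: "TI_SMP_with M D d v (d^2) (vec_outer d)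
           (\<lambda>idx i j. (\<mu> (idx mod d) i * \<mu> (idx div d) j + \<mu> (idx div d) i * \<mu> (idx mod d) j) / 2
                      + \<Sigma> (idx mod d) i j)"
      using a by (intro part4[OF M d_pos]) auto
    show "TI_SMP M D d v \<and> TI_SMP_with M D d v (d^2) (vec_outer d)
           (\<lambda>idx i j. (\<mu> (idx mod d) i * \<mu> (idx div d) j + \<mu> (idx div d) i * \<mu> (idx mod d) j) / 2
                      + \<Sigma> (idx mod d) i j)"
      using r ex by blast
  qed
qed

end
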